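(* Every $W_1$-module in category $\mathcal{J}_1$ is a polynomial module.
   Context: Take $n=1$. Let $\mathcal{F}(\mathbb{T}^1)$ be the commutative algebra with $\mathbb{C}$-basis $e_m=e^{2\pi i m x}$, $m\in\mathbb{Z}$, and $e_me_k=e_{m+k}$. Let $W_1$ be the Lie algebra with $\mathbb{C}$-basis $d(s)=\frac{1}{2\pi i}e^{2\pi i s x}\frac{d}{dx}$, $s\in\mathbb{Z}$, and bracket $[d(s),d(m)]=(m-s)\,d(s+m)$. $W_1$ acts on $\mathcal{F}(\mathbb{T}^1)$ by derivations via $d(s)e_m=m\,e_{m+s}$. Category $\mathcal{J}_1$ consists of $W_1$-modules $J$ that are also $\mathcal{F}(\mathbb{T}^1)$-modules and satisfy: (J1) $d(0)$ acts diagonalizably on $J$; (J2) $J$ is a free $\mathcal{F}(\mathbb{T}^1)$-module of finite rank; (J3) $u(fw)=(uf)w+f(uw)$ for all $u\in W_1$, $f\in\mathcal{F}(\mathbb{T}^1)$, $w\in J$. A module $J$ in $\mathcal{J}_1$ is a polynomial module if there is a basis $v_1,\dots,v_k$ of $J$ over $\mathcal{F}(\mathbb{T}^1)$ such that $d(s)(e_m v_r)=\sum_{\ell=1}^k f_{r\ell}(s,m)\,e_{m+s}v_\ell$ for all $s,m\in\mathbb{Z}$, where each $f_{r\ell}(s,m)$ is a polynomial in $s$ and $m$. *)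

theory Defs
  imports Complex_Main
begin

text \<open>The F(T^1)-module structure is given by the (linear) action
E m of the basis element e_m; the W_1-module structure by the (linear) action
D s of the basis element d(s).\<close>

definition F_module :: "(complex \<Rightarrow> 'v::ab_group_add \<Rightarrow> 'v) \<Rightarrow> (int \<Rightarrow> 'v \<Rightarrow> 'v) \<Rightarrow> bool" where
  "F_module sc E \<longleftrightarrow> (\<forall>m. Vector_Spaces.linear sc sc (E m)) \<and> (\<forall>w. E 0 w = w)
      \<and> (\<forall>m k w. E m (E k w) = E (m + k) w)"

definition W1_module :: "(complex \<Rightarrow> 'v::ab_group_add \<Rightarrow> 'v) \<Rightarrow> (int \<Rightarrow> 'v \<Rightarrow> 'v) \<Rightarrow> bool" where
  "W1_module sc D \<longleftrightarrow> (\<forall>s. Vector_Spaces.linear sc sc (D s))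
      \<and> (\<forall>s m w. D s (D m w) - D m (D s w) = sc (of_int (m - s)) (D (s + m) w))"

definition d0_diagonalizable :: "(complex \<Rightarrow> 'v::ab_group_add \<Rightarrow> 'v) \<Rightarrow> (int \<Rightarrow> 'v \<Rightarrow> 'v) \<Rightarrow> bool" where
  "d0_diagonalizable sc D \<longleftrightarrow>
     (\<forall>w. w \<in> module.span sc {v. \<exists>a. D 0 v = sc a v})"

text \<open>v_0,...,v_{k-1} is a basis of J as an F(T^1)-module: every element is
uniquely of the form sum_r f_r v_r with f_r in F(T^1), i.e. a finite linear
combination of the e_m.\<close>
definition F_basis :: "(complex \<Rightarrow> 'v::ab_group_add \<Rightarrow> 'v) \<Rightarrow> (int \<Rightarrow> 'v \<Rightarrow> 'v) \<Rightarrow> nat \<Rightarrow> (nat \<Rightarrow> 'v) \<Rightarrow> bool" where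
  "F_basis sc E k v \<longleftrightarrow>
     (\<forall>w. \<exists>c S. finite S \<and> w = (\<Sum>r<k. \<Sum>m\<in>S. sc (c r m) (E m (v r))))
   \<and> (\<forall>c S. finite S \<longrightarrow> (\<Sum>r<k. \<Sum>m\<in>S. sc (c r m) (E m (v r))) = 0
          \<longrightarrow> (\<forall>r<k. \<forall>m\<in>S. c r m = 0))"

definition free_finite_rank :: "(complex \<Rightarrow> 'v::ab_group_add \<Rightarrow> 'v) \<Rightarrow> (int \<Rightarrow> 'v \<Rightarrow> 'v) \<Rightarrow> bool" where
  "free_finite_rank sc E \<longleftrightarrow> (\<exists>k v. F_basis sc E k v)"

text \<open>(J3) on basis elements: d(s)(e_m w) = (d(s) e_m) w + e_m (d(s) w), with d(s) e_m = m e_{m+s}.\<close>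
definition compatible :: "(complex \<Rightarrow> 'v::ab_group_add \<Rightarrow> 'v) \<Rightarrow> (int \<Rightarrow> 'v \<Rightarrow> 'v) \<Rightarrow> (int \<Rightarrow> 'v \<Rightarrow> 'v) \<Rightarrow> bool" where
  "compatible sc E D \<longleftrightarrow>
     (\<forall>s m w. D s (E m w) = sc (of_int m) (E (m + s) w) + E m (D s w))"

definition in_J1 :: "(complex \<Rightarrow> 'v::ab_group_add \<Rightarrow> 'v) \<Rightarrow> (int \<Rightarrow> 'v \<Rightarrow> 'v) \<Rightarrow> (int \<Rightarrow> 'v \<Rightarrow> 'v) \<Rightarrow> bool" where
  "in_J1 sc E D \<longleftrightarrow> vector_space sc \<and> F_module sc E \<and> W1_module sc D
     \<and> d0_diagonalizable sc D \<and> free_finite_rank sc E \<and> compatible sc E D"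

definition poly2 :: "(int \<Rightarrow> int \<Rightarrow> complex) \<Rightarrow> bool" where
  "poly2 f \<longleftrightarrow> (\<exists>N c. \<forall>s m. f s m =
      (\<Sum>i\<le>N. \<Sum>j\<le>N. c i j * of_int s ^ i * of_int m ^ j))"

definition polynomial_module :: "(complex \<Rightarrow> 'v::ab_group_add \<Rightarrow> 'v) \<Rightarrow> (int \<Rightarrow> 'v \<Rightarrow> 'v) \<Rightarrow> (int \<Rightarrow> 'v \<Rightarrow> 'v) \<Rightarrow> bool" where
  "polynomial_module sc E D \<longleftrightarrow>
     (\<exists>k v f. F_basis sc E k v \<and> (\<forall>r l. poly2 (f r l))
        \<and> (\<forall>s m. \<forall>r<k. D s (E m (v r)) = (\<Sum>l<k. sc (f r l s m) (E (m + s) (v l)))))"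

end

theory Submission
  imports Defs "HOL-Computational_Algebra.Polynomial" "HOL-Library.Function_Algebras"
begin


lemma pderiv_sum': "finite A \<Longrightarrow> pderiv (\<Sum>x\<in>A. f x) = (\<Sum>x\<in>A. pderiv (f x))"
  by (induction A rule: finite_induct) (auto simp: pderiv_add)

lemma smult_sum_right: "smult c (\<Sum>x\<in>A. f x) = (\<Sum>x\<in>A. smult c (f x))"
  by (induction A rule: infinite_finite_induct) (auto simp: smult_add_right)

lemma pcompose_power': "pcompose (p ^ n) q = (pcompose p q) ^ n"
  by (induction n) (auto simp: pcompose_mult pcompose_1)

fun fd :: "nat \<Rightarrow> (int \<Rightarrow> complex) \<Rightarrow> int \<Rightarrow> complex" where
  "fd 0 \<phi> = \<phi>"
| "fd (Suc j) \<phi> = (\<lambda>n. fd j \<phi> (n + 1) - fd j \<phi> n)"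

lemma fd_Suc': "fd (Suc j) \<phi> = fd j (\<lambda>n. \<phi> (n + 1) - \<phi> n)"
  by (induction j) auto

lemma newton:
  assumes "\<And>n. fd N \<phi> n = 0"
  shows "\<phi> n = (\<Sum>j<N. (of_int n gchoose j) * fd j \<phi> 0)"
  using assms
proof (induction N arbitrary: \<phi> n)
  case 0
  then show ?case by simp
next
  case (Suc N)
  define \<delta> where "\<delta> = (\<lambda>n. \<phi> (n + 1) - \<phi> n)"
  have IH: "\<delta> n = (\<Sum>j<N. (of_int n gchoose j) * fd (Suc j) \<phi> 0)" for n
  proof -
    have h: "\<And>n. fd N \<delta> n = 0" using Suc.prems by (simp only: \<delta>_def flip: fd_Suc')
    show ?thesis using Suc.IH[of \<delta> n, OF h] by (simp only: \<delta>_def flip: fd_Suc')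
  qed
  define \<Psi> where "\<Psi> = (\<lambda>n::int. \<Sum>j<Suc N. (of_int n gchoose j) * fd j \<phi> 0)"
  have step: "\<Psi> (n + 1) - \<Psi> n = \<delta> n" for n
  proof -
    have "\<Psi> (n + 1) - \<Psi> n = (\<Sum>j<Suc N. (((of_int n + 1) gchoose j) - (of_int n gchoose j)) * fd j \<phi> 0)"
      by (simp add: \<Psi>_def sum_subtractf left_diff_distrib del: fd.simps)
    also have "\<dots> = (\<Sum>j<N. (((of_int n + 1) gchoose Suc j) - (of_int n gchoose Suc j)) * fd (Suc j) \<phi> 0)"
      by (subst sum.lessThan_Suc_shift) simp
    also have "\<dots> = \<delta> n" by (simp add: IH gbinomial_Suc_Suc del: fd.simps)
    finally show ?thesis .
  qed
  have Psi0: "\<Psi> 0 = \<phi> 0"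
    unfolding \<Psi>_def by (subst sum.lessThan_Suc_shift) simp
  have "\<phi> n = \<Psi> n"
  proof (induction n rule: int_induct[where k=0])
    case base then show ?case by (simp add: Psi0)
  next
    case (step1 i) then show ?case using step[of i] by (simp add: \<delta>_def algebra_simps)
  next
    case (step2 i) then show ?case using step[of "i - 1"] by (simp add: \<delta>_def algebra_simps)
  qed
  then show ?case by (simp add: \<Psi>_def)
qed

lemma gchoose_poly: "\<exists>P. \<forall>x::complex. (x gchoose j) = poly P x"
proof -
  define P :: "complex poly" where "P = smult (1 / fact j) (\<Prod>i\<in>{0..<j}. [:- of_nat i, 1:])"
  have "(x gchoose j) = poly P x" for x :: complex
    by (simp add: P_def gbinomial_prod_rev poly_prod)
  then show ?thesis by blast
qed

lemma newton_poly:
  assumes "\<And>n. fd N \<phi> n = 0"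
  shows "\<exists>P. \<forall>n. \<phi> n = poly P (of_int n)"
proof -
  have "\<forall>j. \<exists>P. \<forall>x::complex. (x gchoose j) = poly P x" using gchoose_poly by blast
  from choice[OF this] obtain G where G: "\<forall>j. \<forall>x::complex. (x gchoose j) = poly (G j) x" by blast
  define P where "P = (\<Sum>j<N. smult (fd j \<phi> 0) (G j))"
  have "\<phi> n = poly P (of_int n)" for n
    by (subst newton[OF assms]) (simp add: P_def poly_sum G mult.commute)
  then show ?thesis by blast
qed


definition wq :: "complex poly" where "wq = [:-1, 1:]"

lemma w_pderiv_pow: "wq * pderiv (wq ^ n) = smult (of_nat n) (wq ^ n)"
proof (cases n)
  case (Suc m)
  have "pderiv wq = 1" by (simp add: wq_def pderiv_pCons)
  then have "pderiv (wq ^ Suc m) = smult (of_nat (Suc m)) (wq ^ m)"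
    by (simp only: pderiv_power_Suc) simp
  then show ?thesis using Suc by simp
qed simp

lemma expand:
  fixes g :: "complex poly"
  assumes "g \<noteq> 0" "poly g 1 = 0"
  shows "\<exists>c d e. c \<ge> 1 \<and> e 0 \<noteq> 0 \<and> g = (\<Sum>j\<le>d. smult (e j) (wq ^ (c + j)))"
proof -
  obtain q where gq: "g = [:-1,1:] ^ order 1 g * q" and nd: "\<not> [:-1,1:] dvd q"
    using order_decomp[OF assms(1), of 1] by auto
  define c where "c = order 1 g"
  have c1: "c \<ge> 1" using order_root[of g 1] assms by (simp add: c_def)
  have q1: "poly q 1 \<noteq> 0" using nd by (simp add: poly_eq_0_iff_dvd)
  define U where "U = pcompose q [:1,1:]"
  have "pcompose [:1,1:] wq = [:0,1:]" by (simp add: wq_def pcompose_pCons)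
  then have hq: "q = pcompose U wq"
    by (simp add: U_def flip: pcompose_assoc)
  have "U = (\<Sum>j\<le>degree U. monom (coeff U j) j)"
    by (simp add: poly_as_sum_of_monoms)
  also have "\<dots> = (\<Sum>j\<le>degree U. smult (coeff U j) ([:0,1:] ^ j))"
    by (simp add: monom_altdef)
  finally have "pcompose U wq = pcompose (\<Sum>j\<le>degree U. smult (coeff U j) ([:0,1:] ^ j)) wq"
    by simp
  also have "\<dots> = (\<Sum>j\<le>degree U. smult (coeff U j) (wq ^ j))"
    by (simp add: pcompose_sum pcompose_smult pcompose_power' pcompose_pCons)
  finally have qU: "q = (\<Sum>j\<le>degree U. smult (coeff U j) (wq ^ j))" using hq by simp
  have "g = wq ^ c * q" using gq by (simp add: c_def wq_def)
  also have "\<dots> = (\<Sum>j\<le>degree U. smult (coeff U j) (wq ^ (c + j)))"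
    by (simp add: qU sum_distrib_left power_add)
  finally have g_eq: "g = (\<Sum>j\<le>degree U. smult (coeff U j) (wq ^ (c + j)))" .
  have "coeff U 0 = poly q 1" by (simp add: U_def poly_0_coeff_0[symmetric] poly_pcompose)
  then show ?thesis using c1 q1 g_eq by (intro exI[of _ c] exI[of _ "degree U"] exI[of _ "coeff U"]) simp
qed

lemma w_combo:
  assumes "finite I" "n0 \<in> I" "cn n0 \<noteq> 0"
  shows "(\<Sum>n\<in>I. smult (cn n) (wq ^ Suc n)) \<noteq> 0" "poly (\<Sum>n\<in>I. smult (cn n) (wq ^ Suc n)) 1 = 0"
proof -
  have pw: "pcompose wq [:1,1:] = [:0,1:]" by (simp add: wq_def pcompose_pCons)
  have "pcompose (\<Sum>n\<in>I. smult (cn n) (wq ^ Suc n)) [:1,1:] = (\<Sum>n\<in>I. monom (cn n) (Suc n))"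
    by (simp add: pcompose_sum pcompose_smult pcompose_power' pw monom_altdef del: power_Suc)
  moreover have "coeff (\<Sum>n\<in>I. monom (cn n) (Suc n)) (Suc n0) = cn n0"
  proof -
    have "coeff (\<Sum>n\<in>I. monom (cn n) (Suc n)) (Suc n0) = (\<Sum>n\<in>I. if n = n0 then cn n else 0)"
      by (simp add: coeff_sum)
    also have "\<dots> = cn n0" using assms(1,2) by (simp add: sum.delta)
    finally show ?thesis .
  qed
  ultimately show "(\<Sum>n\<in>I. smult (cn n) (wq ^ Suc n)) \<noteq> 0" using assms(3) by auto
  show "poly (\<Sum>n\<in>I. smult (cn n) (wq ^ Suc n)) 1 = 0" by (simp add: poly_sum wq_def)
qed

lemma fun_sum_apply: "(\<Sum>x\<in>A. f x) y = (\<Sum>x\<in>A. f x y)"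
  by (induction A rule: infinite_finite_induct) auto

definition mmul :: "nat \<Rightarrow> (nat \<Rightarrow> nat \<Rightarrow> complex) \<Rightarrow> (nat \<Rightarrow> nat \<Rightarrow> complex) \<Rightarrow> nat \<Rightarrow> nat \<Rightarrow> complex" where
  "mmul k A B = (\<lambda>r p. \<Sum>l<k. A r l * B l p)"

locale polyrel =
  fixes k :: nat and M :: "int \<Rightarrow> nat \<Rightarrow> nat \<Rightarrow> complex"
  assumes Mz: "\<And>s r p. k \<le> r \<or> k \<le> p \<Longrightarrow> M s r p = 0"
  and rel: "\<And>s m r p. mmul k (M m) (M s) r p - mmul k (M s) (M m) r p
        = of_int (m - s) * M (s + m) r p - of_int m * M m r p + of_int s * M s r p"
begin

definition rho :: "int \<Rightarrow> complex poly \<Rightarrow> nat \<Rightarrow> nat \<Rightarrow> complex" where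
  "rho a P = (\<lambda>r p. \<Sum>i\<le>degree P. coeff P i * M (a + int i - 1) r p)"

lemma rho_bound:
  assumes "degree P < N"
  shows "rho a P r p = (\<Sum>i<N. coeff P i * M (a + int i - 1) r p)"
proof -
  have "(\<Sum>i<N. coeff P i * M (a + int i - 1) r p) = (\<Sum>i\<le>degree P. coeff P i * M (a + int i - 1) r p)"
    using assms by (intro sum.mono_neutral_right) (auto simp: coeff_eq_0)
  then show ?thesis by (simp add: rho_def)
qed

lemma rho_add: "rho a (P + Q) r p = rho a P r p + rho a Q r p"
proof -
  define N where "N = Suc (max (degree P) (degree Q))"
  have "degree (P + Q) < N" "degree P < N" "degree Q < N"
    unfolding N_def using degree_add_le_max[of P Q] by auto
  then show ?thesis by (simp add: rho_bound[of _ N] sum.distrib algebra_simps)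
qed

lemma rho_smult: "rho a (smult c P) r p = c * rho a P r p"
proof -
  define N where "N = Suc (degree P)"
  have "degree (smult c P) < N" "degree P < N"
    unfolding N_def using degree_smult_le[of c P] by auto
  then show ?thesis by (simp add: rho_bound[of _ N] sum_distrib_left algebra_simps)
qed

lemma rho_0[simp]: "rho a 0 r p = 0"
  by (simp add: rho_def)

lemma rho_minus: "rho a (- P) r p = - rho a P r p"
  using rho_smult[of a "-1" P r p] by simp

lemma rho_diff: "rho a (P - Q) r p = rho a P r p - rho a Q r p"
  using rho_add[of a P "-Q" r p] rho_minus[of a Q r p] by simp

lemma rho_sum: "finite A \<Longrightarrow> rho a (\<Sum>x\<in>A. f x) r p = (\<Sum>x\<in>A. rho a (f x) r p)"
  by (induction A rule: finite_induct) (auto simp: rho_add)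

lemma rho_monom: "rho a (monom c n) r p = c * M (a + int n - 1) r p"
proof -
  have "degree (monom c n) < Suc n" by (simp add: degree_monom_le le_imp_less_Suc)
  then have "rho a (monom c n) r p = (\<Sum>i<Suc n. coeff (monom c n) i * M (a + int i - 1) r p)"
    by (rule rho_bound)
  also have "\<dots> = c * M (a + int n - 1) r p"
    by (subst sum.remove[of _ n]) auto
  finally show ?thesis .
qed

lemma rho_monom1: "rho a (monom 1 n) = M (a + int n - 1)"
  by (intro ext) (simp add: rho_monom)

lemma rho_shift: "rho a (pCons 0 P) r p = rho (a + 1) P r p"
proof -
  define N where "N = Suc (degree P)"
  have d: "degree (pCons 0 P) < Suc N" "degree P < N"
    unfolding N_def by (auto simp: degree_pCons_le le_imp_less_Suc)
  have "rho a (pCons 0 P) r p = (\<Sum>i<Suc N. coeff (pCons 0 P) i * M (a + int i - 1) r p)"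
    by (rule rho_bound[OF d(1)])
  also have "\<dots> = (\<Sum>i<N. coeff P i * M (a + 1 + int i - 1) r p)"
    by (subst sum.lessThan_Suc_shift) (simp add: algebra_simps)
  also have "\<dots> = rho (a + 1) P r p" by (rule rho_bound[OF d(2), symmetric])
  finally show ?thesis .
qed

lemma rho_X: "rho a ([:0,1:] * P) r p = rho (a + 1) P r p"
  by (simp add: rho_shift)

definition br :: "int \<Rightarrow> int \<Rightarrow> complex poly \<Rightarrow> complex poly \<Rightarrow> complex poly" where
  "br a b P Q = smult (of_int (b - a)) (P * Q) + [:0,1:] * (P * pderiv Q - pderiv P * Q)"

definition eu :: "int \<Rightarrow> complex poly \<Rightarrow> complex poly" where
  "eu a P = smult (of_int (a - 1)) P + [:0,1:] * pderiv P"

definition Phi where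
  "Phi a b P Q r p = mmul k (rho b Q) (rho a P) r p - mmul k (rho a P) (rho b Q) r p
     - (rho (a + b - 1) (br a b P Q) r p - poly P 1 * rho b (eu b Q) r p + poly Q 1 * rho a (eu a P) r p)"

lemma Phi_add1: "Phi a b (P1 + P2) Q r p = Phi a b P1 Q r p + Phi a b P2 Q r p"
proof -
  have "br a b (P1 + P2) Q = br a b P1 Q + br a b P2 Q"
    by (simp add: br_def pderiv_add algebra_simps smult_add_right)
  moreover have "eu a (P1 + P2) = eu a P1 + eu a P2"
    by (simp add: eu_def pderiv_add algebra_simps smult_add_right)
  ultimately show ?thesis
    by (simp add: Phi_def mmul_def rho_add algebra_simps sum.distrib)
qed

lemma Phi_smult1: "Phi a b (smult c P) Q r p = c * Phi a b P Q r p"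
proof -
  have "br a b (smult c P) Q = smult c (br a b P Q)"
    by (simp add: br_def pderiv_smult algebra_simps smult_add_right smult_diff_right)
  moreover have "eu a (smult c P) = smult c (eu a P)"
    by (simp add: eu_def pderiv_smult algebra_simps smult_add_right smult_diff_right)
  ultimately show ?thesis
    by (simp add: Phi_def mmul_def rho_smult algebra_simps sum_distrib_left)
qed

lemma Phi_add2: "Phi a b P (Q1 + Q2) r p = Phi a b P Q1 r p + Phi a b P Q2 r p"
proof -
  have "br a b P (Q1 + Q2) = br a b P Q1 + br a b P Q2"
    by (simp add: br_def pderiv_add algebra_simps smult_add_right)
  moreover have "eu b (Q1 + Q2) = eu b Q1 + eu b Q2"
    by (simp add: eu_def pderiv_add algebra_simps smult_add_right)
  ultimately show ?thesis
    by (simp add: Phi_def mmul_def rho_add algebra_simps sum.distrib)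
qed

lemma Phi_smult2: "Phi a b P (smult c Q) r p = c * Phi a b P Q r p"
proof -
  have "br a b P (smult c Q) = smult c (br a b P Q)"
    by (simp add: br_def pderiv_smult algebra_simps smult_add_right smult_diff_right)
  moreover have "eu b (smult c Q) = smult c (eu b Q)"
    by (simp add: eu_def pderiv_smult algebra_simps smult_add_right smult_diff_right)
  ultimately show ?thesis
    by (simp add: Phi_def mmul_def rho_smult algebra_simps sum_distrib_left)
qed

lemma X_pderiv_monom: "pCons 0 (pderiv (monom c n)) = monom (of_nat n * c) n"
proof (cases n)
  case (Suc m)
  have "pderiv (monom c (Suc m)) = monom (of_nat (Suc m) * c) m"
    by (simp only: pderiv_monom) simp
  then show ?thesis using Suc by (simp add: monom_Suc)
qed (simp add: pderiv_monom)

lemma Phi_monom: "Phi a b (monom 1 i) (monom 1 j) r p = 0"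
proof -
  have "br a b (monom 1 i) (monom 1 j) = monom (of_int (b - a) + of_nat j - of_nat i) (i + j)"
  proof -
    have "[:0,1:] * (monom 1 i * pderiv (monom 1 j) - pderiv (monom 1 i) * monom 1 j)
        = monom 1 i * ([:0,1:] * pderiv (monom 1 j)) - ([:0,1:] * pderiv (monom 1 i)) * monom 1 j"
      by (simp add: algebra_simps)
    also have "\<dots> = monom (of_nat j - of_nat i) (i + j)"
      by (simp add: X_pderiv_monom mult_monom add.commute flip: diff_monom)
    finally show ?thesis
      by (simp add: br_def mult_monom smult_monom flip: add_monom diff_monom)
  qed
  moreover have "eu b (monom 1 j) = monom (of_int (b - 1) + of_nat j) j"
    by (simp add: eu_def X_pderiv_monom smult_monom flip: add_monom)
  moreover have "eu a (monom 1 i) = monom (of_int (a - 1) + of_nat i) i"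
    by (simp add: eu_def X_pderiv_monom smult_monom flip: add_monom)
  ultimately show ?thesis
    using rel[of "a + int i - 1" "b + int j - 1" r p]
    by (simp add: Phi_def rho_monom rho_monom1 poly_monom algebra_simps)
qed

lemma lin_ext:
  fixes F :: "complex poly \<Rightarrow> complex"
  assumes add: "\<And>P Q. F (P + Q) = F P + F Q" and sm: "\<And>c P. F (smult c P) = c * F P"
  shows "F P = (\<Sum>i\<le>degree P. coeff P i * F (monom 1 i))"
proof -
  have F0: "F 0 = 0" using sm[of 0 0] by simp
  have Fs: "finite A \<Longrightarrow> F (\<Sum>x\<in>A. g x) = (\<Sum>x\<in>A. F (g x))" for A and g :: "nat \<Rightarrow> complex poly"
    by (induction A rule: finite_induct) (auto simp: F0 add)
  have "F P = F (\<Sum>i\<le>degree P. smult (coeff P i) (monom 1 i))"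
    by (simp add: smult_monom poly_as_sum_of_monoms)
  also have "\<dots> = (\<Sum>i\<le>degree P. coeff P i * F (monom 1 i))"
    by (simp add: Fs sm)
  finally show ?thesis .
qed

lemma Phi_zero: "Phi a b P Q r p = 0"
proof -
  have "Phi a b P (monom 1 j) r p = 0" for j
    by (subst lin_ext[of "\<lambda>P. Phi a b P (monom 1 j) r p"]) (auto simp: Phi_add1 Phi_smult1 Phi_monom)
  then show ?thesis
    by (subst lin_ext[of "\<lambda>Q. Phi a b P Q r p"]) (auto simp: Phi_add2 Phi_smult2)
qed

lemma ident:
  "mmul k (rho b Q) (rho a P) r p - mmul k (rho a P) (rho b Q) r p
     = rho (a + b - 1) (br a b P Q) r p - poly P 1 * rho b (eu b Q) r p + poly Q 1 * rho a (eu a P) r p"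
  using Phi_zero[of a b P Q r p] by (simp add: Phi_def)


definition Zr :: "int \<Rightarrow> complex poly \<Rightarrow> bool" where
  "Zr a P \<longleftrightarrow> (\<forall>r p. rho a P r p = 0)"

lemma ideal:
  assumes "poly P 1 = 0" "poly Q 1 = 0" "Zr b Q"
  shows "Zr (a + b - 1) (br a b P Q)"
proof -
  have q0: "rho b Q = (\<lambda>r p. 0)" using assms(3) by (auto simp: Zr_def)
  show ?thesis unfolding Zr_def
  proof (intro allI)
    fix r p
    show "rho (a + b - 1) (br a b P Q) r p = 0"
      using ident[of b Q a P r p] assms(1,2) q0 by (simp add: mmul_def)
  qed
qed

lemma sq_kill:
  assumes "poly f 1 = 0" "Zr 0 f" "n \<noteq> -1"
  shows "Zr n (f * f)"
proof -
  have "Zr (n + 1 + 0 - 1) (br (n + 1) 0 f f)"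
    by (rule ideal) (use assms in auto)
  moreover have "br (n + 1) 0 f f = smult (- of_int (n + 1)) (f * f)"
    by (simp add: br_def mult.commute)
  moreover have "of_int (n + 1) \<noteq> (0::complex)" proof -
    have "n + 1 \<noteq> 0" using assms(3) by simp
    then show ?thesis by (metis of_int_eq_0_iff)
  qed
  ultimately show ?thesis unfolding Zr_def
  proof (intro allI)
    fix r p
    assume a1: "\<forall>r p. rho (n + 1 + 0 - 1) (br (n + 1) 0 f f) r p = 0"
      and a2: "br (n + 1) 0 f f = smult (- of_int (n + 1)) (f * f)"
      and a3: "of_int (n + 1) \<noteq> (0::complex)"
    have "- of_int (n + 1) * rho n (f * f) r p = 0"
      using a1[rule_format, of r p] unfolding a2 rho_smult by simp
    then show "rho n (f * f) r p = 0" using a3 by (metis mult_eq_0_iff neg_equal_0_iff_equal)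
  qed
qed

lemma fourth_kill:
  assumes "poly f 1 = 0" "Zr 0 f"
  shows "Zr n ((f * f) * (f * f))"
proof -
  define g where "g = f * f"
  have g1: "poly g 1 = 0" using assms by (simp add: g_def)
  have gz: "Zr m g" if "m \<noteq> -1" for m using sq_kill[OF assms that] by (simp add: g_def)
  define h where "h = pCons 0 g"
  have h1: "poly h 1 = 0" using g1 by (simp add: h_def)
  have hz: "Zr 0 h" using gz[of 1] by (simp add: h_def Zr_def rho_shift)
  have hh: "h * h = pCons 0 (pCons 0 (g * g))" by (simp add: h_def)
  have A: "Zr m (g * g)" if "m \<noteq> -1" for m using sq_kill[OF g1 gz[of 0] that] by simp
  have B: "Zr (m + 2) (g * g)" if "m \<noteq> -1" for m
    using sq_kill[OF h1 hz that] by (simp add: hh Zr_def rho_shift add.assoc)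
  show ?thesis
  proof (cases "n = -1")
    case True
    then show ?thesis using B[of "-3"] by (simp add: g_def)
  next
    case False
    then show ?thesis using A[of n] by (simp add: g_def)
  qed
qed

definition Bs :: "complex poly \<Rightarrow> bool" where
  "Bs P \<longleftrightarrow> poly P 1 = 0 \<and> (\<forall>n. Zr n P)"

lemma Bs_add: "Bs P \<Longrightarrow> Bs Q \<Longrightarrow> Bs (P + Q)"
  by (simp add: Bs_def Zr_def rho_add)

lemma Bs_smult: "Bs P \<Longrightarrow> Bs (smult c P)"
  by (simp add: Bs_def Zr_def rho_smult)

lemma Bs_diff: "Bs P \<Longrightarrow> Bs Q \<Longrightarrow> Bs (P - Q)"
  by (simp add: Bs_def Zr_def rho_diff)

lemma Bs_euler:
  assumes "Bs P"
  shows "Bs ([:-1,1:] * pderiv P)"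
proof -
  have P1: "poly P 1 = 0" and PZ: "\<And>n. Zr n P" using assms by (auto simp: Bs_def)
  have "Zr n ([:-1,1:] * pderiv P)" for n
  proof -
    have "Zr (0 + n - 1) (br 0 n [:-1,1:] P)"
      by (rule ideal) (use P1 PZ in auto)
    moreover have "br 0 n [:-1,1:] P = smult (of_int n) (pCons 0 P) - smult (of_int n) P
         + pCons 0 ([:-1,1:] * pderiv P) - pCons 0 P"
      by (simp add: br_def pderiv_pCons algebra_simps smult_add_right smult_diff_right)
    ultimately have "rho (n - 1) (smult (of_int n) (pCons 0 P) - smult (of_int n) P
         + pCons 0 ([:-1,1:] * pderiv P) - pCons 0 P) r p = 0" for r p
      by (simp add: Zr_def)
    then have "rho n ([:-1,1:] * pderiv P) r p = 0" for r p
      using PZ[of n] PZ[of "n - 1"]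
      by (simp add: Zr_def rho_add rho_diff rho_smult rho_shift)
    then show ?thesis by (simp add: Zr_def)
  qed
  then show ?thesis by (simp add: Bs_def)
qed


lemma rho_w: "rho n (wq ^ j) r p = fd j (\<lambda>t. M (t - 1) r p) n"
proof (induction j arbitrary: n)
  case 0
  show ?case using rho_monom[of n 1 0 r p] by simp
next
  case (Suc j)
  have "wq ^ Suc j = pCons 0 (wq ^ j) - wq ^ j" by (simp add: wq_def algebra_simps)
  then show ?case using Suc by (simp add: rho_diff rho_shift)
qed


lemma euler_iter:
  assumes B: "Bs (\<Sum>j\<le>d. smult (e j) (wq ^ (c + j)))" and e0: "e 0 \<noteq> 0"
  shows "Bs (wq ^ c)"
proof -
  define S where "S t = (\<Sum>j\<le>d. smult (e j * (\<Prod>i\<in>{1..t}. (of_nat j - of_nat i))) (wq ^ (c + j)))" for t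
  have St: "Bs (S t)" for t
  proof (induction t)
    case 0
    then show ?case using B by (simp add: S_def)
  next
    case (Suc t)
    define P where "P j = e j * (\<Prod>i\<in>{1..t}. (of_nat j - of_nat i :: complex))" for j
    have St': "S t = (\<Sum>j\<le>d. smult (P j) (wq ^ (c + j)))" by (simp add: S_def P_def)
    have "wq * pderiv (S t) - smult (of_nat (c + Suc t)) (S t)
        = (\<Sum>j\<le>d. smult (P j * of_nat (c + j)) (wq ^ (c + j)) - smult (of_nat (c + Suc t) * P j) (wq ^ (c + j)))"
      by (simp add: St' pderiv_sum' pderiv_smult sum_distrib_left w_pderiv_pow smult_sum_right sum_subtractf mult.commute)
    also have "\<dots> = (\<Sum>j\<le>d. smult (P j * (of_nat j - of_nat (Suc t))) (wq ^ (c + j)))"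
      by (intro sum.cong refl) (simp add: algebra_simps flip: smult_diff_left)
    also have "\<dots> = S (Suc t)"
      by (simp add: S_def P_def atLeastAtMostSuc_conv mult_ac)
    finally have "S (Suc t) = wq * pderiv (S t) - smult (of_nat (c + Suc t)) (S t)" by simp
    then show ?case using Suc Bs_euler[of "S t"] Bs_diff Bs_smult by (simp add: wq_def)
  qed
  define \<kappa> where "\<kappa> = e 0 * (\<Prod>i\<in>{1..d}. (0 - of_nat i :: complex))"
  have k0: "\<kappa> \<noteq> 0" using e0 by (simp add: \<kappa>_def)
  have "S d = smult \<kappa> (wq ^ c)"
  proof -
    have "S d = (\<Sum>j\<in>{0}. smult (e j * (\<Prod>i\<in>{1..d}. (of_nat j - of_nat i))) (wq ^ (c + j)))"
      unfolding S_def
    proof (rule sum.mono_neutral_right)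
      show "\<forall>j\<in>{..d} - {0}. smult (e j * (\<Prod>i\<in>{1..d}. (of_nat j - of_nat i))) (wq ^ (c + j)) = 0"
      proof
        fix j assume "j \<in> {..d} - {0}"
        then have "j \<in> {1..d}" by auto
        then have "(\<Prod>i\<in>{1..d}. (of_nat j - of_nat i :: complex)) = 0"
          by (intro prod_zero) auto
        then show "smult (e j * (\<Prod>i\<in>{1..d}. (of_nat j - of_nat i))) (wq ^ (c + j)) = 0" by simp
      qed
    qed auto
    then show ?thesis by (simp add: \<kappa>_def)
  qed
  then have "wq ^ c = smult (1 / \<kappa>) (S d)" using k0 by simp
  then show ?thesis using St[of d] Bs_smult by simp
qed


lemma rho_out: "k \<le> r \<or> k \<le> p \<Longrightarrow> rho a P r p = 0"
  by (simp add: rho_def Mz)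

lemma exists_kernel: "\<exists>f. f \<noteq> 0 \<and> poly f 1 = 0 \<and> Zr 0 f"
proof -
  define sM :: "complex \<Rightarrow> (nat \<Rightarrow> nat \<Rightarrow> complex) \<Rightarrow> (nat \<Rightarrow> nat \<Rightarrow> complex)"
    where "sM = (\<lambda>c A. \<lambda>r p. c * A r p)"
  interpret V: vector_space sM
    by unfold_locales (auto simp: sM_def fun_eq_iff algebra_simps)
  define \<delta> :: "nat \<times> nat \<Rightarrow> nat \<Rightarrow> nat \<Rightarrow> complex" where "\<delta> = (\<lambda>(i,j) r p. if r = i \<and> p = j then 1 else 0)"
  define T where "T = \<delta> ` ({..<k} \<times> {..<k})"
  have fT: "finite T" by (simp add: T_def)
  have cT: "card T \<le> k * k"
    unfolding T_def using card_image_le[of "{..<k} \<times> {..<k}" \<delta>] by (simp add: card_cartesian_product)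
  define Vv where "Vv n = rho 0 (wq ^ Suc n)" for n
  define I where "I = {..k * k}"
  have fI: "finite I" by (simp add: I_def)
  have span: "Vv n \<in> V.span T" for n
  proof -
    have "Vv n = (\<Sum>x\<in>{..<k} \<times> {..<k}. sM (Vv n (fst x) (snd x)) (\<delta> x))"
    proof (intro ext)
      fix r p
      show "Vv n r p = (\<Sum>x\<in>{..<k} \<times> {..<k}. sM (Vv n (fst x) (snd x)) (\<delta> x)) r p"
      proof (cases "r < k \<and> p < k")
        case True
        have "(\<Sum>x\<in>{..<k} \<times> {..<k}. sM (Vv n (fst x) (snd x)) (\<delta> x)) r p
            = (\<Sum>x\<in>{..<k} \<times> {..<k}. if x = (r, p) then Vv n r p else 0)"
          unfolding fun_sum_apply sM_def \<delta>_def by (intro sum.cong refl) (auto split: if_splits)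
        also have "\<dots> = Vv n r p" using True by (simp add: sum.delta')
        finally show ?thesis by simp
      next
        case False
        then have "Vv n r p = 0" by (auto simp: Vv_def rho_out)
        moreover have "(\<Sum>x\<in>{..<k} \<times> {..<k}. sM (Vv n (fst x) (snd x)) (\<delta> x)) r p = 0"
          using False by (auto simp: fun_sum_apply sM_def \<delta>_def split_def intro!: sum.neutral)
        ultimately show ?thesis by simp
      qed
    qed
    also have "\<dots> \<in> V.span T"
      by (intro V.span_sum V.span_scale V.span_base) (auto simp: T_def)
    finally show ?thesis .
  qed
  have rho_combo: "rho 0 (\<Sum>n\<in>I. smult (cn n) (wq ^ Suc n)) r p = (\<Sum>n\<in>I. cn n * Vv n r p)" for cn r p
    by (simp only: rho_sum[OF fI] rho_smult Vv_def)
  show ?thesis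
  proof (cases "inj_on Vv I")
    case True
    have "V.dependent (Vv ` I)"
    proof (rule ccontr)
      assume ind: "\<not> V.dependent (Vv ` I)"
      have "card (Vv ` I) \<le> card T"
        using V.independent_span_bound[OF fT ind] span by auto
      moreover have "card (Vv ` I) = k * k + 1" using True by (simp add: card_image I_def)
      ultimately show False using cT by simp
    qed
    then obtain t u where t: "finite t" "t \<subseteq> Vv ` I" "(\<Sum>v\<in>t. sM (u v) v) = 0" and tv: "\<exists>v\<in>t. u v \<noteq> 0"
      unfolding V.dependent_explicit by blast
    define cn where "cn n = (if Vv n \<in> t then u (Vv n) else 0)" for n
    obtain n0 where n0: "n0 \<in> I" "cn n0 \<noteq> 0" using tv t(2) by (auto simp: cn_def)
    define f where "f = (\<Sum>n\<in>I. smult (cn n) (wq ^ Suc n))"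
    have "rho 0 f r p = 0" for r p
    proof -
      have "rho 0 f r p = (\<Sum>n\<in>I. cn n * Vv n r p)" unfolding f_def by (rule rho_combo)
      also have "\<dots> = (\<Sum>n\<in>I. if Vv n \<in> t then u (Vv n) * Vv n r p else 0)"
        by (intro sum.cong) (auto simp: cn_def)
      also have "\<dots> = (\<Sum>n\<in>{n\<in>I. Vv n \<in> t}. u (Vv n) * Vv n r p)"
        by (rule sum.inter_filter[OF fI, symmetric])
      also have "\<dots> = (\<Sum>v\<in>Vv ` {n\<in>I. Vv n \<in> t}. u v * v r p)"
        by (rule sum.reindex[symmetric, unfolded comp_def]) (use True in \<open>auto intro: inj_on_subset\<close>)
      also have "Vv ` {n\<in>I. Vv n \<in> t} = t" using t(2) by auto
      also have "(\<Sum>v\<in>t. u v * v r p) = (\<Sum>v\<in>t. sM (u v) v) r p"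
        by (simp add: fun_sum_apply sM_def)
      also have "\<dots> = 0" using t(3) by simp
      finally show ?thesis .
    qed
    then show ?thesis using w_combo[of I n0 cn, OF fI n0] by (auto simp: f_def Zr_def)
  next
    case False
    then obtain a b where ab: "a \<in> I" "b \<in> I" "a \<noteq> b" "Vv a = Vv b" by (auto simp: inj_on_def)
    define cn :: "nat \<Rightarrow> complex" where "cn n = (if n = a then 1 else if n = b then -1 else 0)" for n
    define f where "f = (\<Sum>n\<in>I. smult (cn n) (wq ^ Suc n))"
    have ca: "cn a \<noteq> 0" by (simp add: cn_def)
    have "rho 0 f r p = 0" for r p
    proof -
      have "rho 0 f r p = (\<Sum>n\<in>I. cn n * Vv n r p)" unfolding f_def by (rule rho_combo)
      also have "\<dots> = (\<Sum>n\<in>I. (if n = a then Vv a r p else 0) + (if n = b then - Vv b r p else 0))"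
        by (intro sum.cong refl) (use ab in \<open>auto simp: cn_def\<close>)
      also have "\<dots> = 0" using ab fI by (simp add: sum.distrib sum.delta)
      finally show ?thesis .
    qed
    then show ?thesis using w_combo[of I a cn, OF fI ab(1) ca] by (auto simp: f_def Zr_def)
  qed
qed


lemma M_poly: "\<exists>P. \<forall>s. M s r p = poly P (of_int s)"
proof -
  obtain f where f: "f \<noteq> 0" "poly f 1 = 0" "Zr 0 f" using exists_kernel by blast
  define g where "g = (f * f) * (f * f)"
  have gB: "Bs g" using fourth_kill[OF f(2,3)] f(2) by (simp add: Bs_def g_def)
  have g0: "g \<noteq> 0" "poly g 1 = 0" using f by (auto simp: g_def)
  obtain c d e where cde: "c \<ge> 1" "e 0 \<noteq> 0" "g = (\<Sum>j\<le>d. smult (e j) (wq ^ (c + j)))"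
    using expand[OF g0] by blast
  have "Bs (wq ^ c)" using euler_iter[of e c d] gB cde by simp
  then have "fd c (\<lambda>t. M (t - 1) r p) n = 0" for n
    by (simp add: Bs_def Zr_def flip: rho_w)
  from newton_poly[OF this] obtain P where P: "\<And>n. M (n - 1) r p = poly P (of_int n)" by blast
  have "M s r p = poly (pcompose P [:1,1:]) (of_int s)" for s
    using P[of "s + 1"] by (simp add: poly_pcompose algebra_simps)
  then show ?thesis by blast
qed

end



locale J1 = vector_space sc for sc :: "complex \<Rightarrow> 'v::ab_group_add \<Rightarrow> 'v" +
  fixes E D :: "int \<Rightarrow> 'v \<Rightarrow> 'v" and k0 :: nat and v0 :: "nat \<Rightarrow> 'v"
  assumes Elin: "\<And>m. Vector_Spaces.linear sc sc (E m)"
  and E0: "\<And>w. E 0 w = w" and Eadd: "\<And>m j w. E m (E j w) = E (m + j) w"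
  and Dlin: "\<And>s. Vector_Spaces.linear sc sc (D s)"
  and Dbr: "\<And>s m w. D s (D m w) - D m (D s w) = sc (of_int (m - s)) (D (s + m) w)"
  and diag: "\<And>w. w \<in> span {v. \<exists>a. D 0 v = sc a v}"
  and free: "F_basis sc E k0 v0"
  and compat: "\<And>s m w. D s (E m w) = sc (of_int m) (E (m + s) w) + E m (D s w)"
begin

lemma Ehom: "module_hom sc sc (E m)" using Elin[of m] by (simp add: linear_iff_module_hom)
lemma Dhom: "module_hom sc sc (D m)" using Dlin[of m] by (simp add: linear_iff_module_hom)

lemma E_add: "E m (x + y) = E m x + E m y" using module_hom.add[OF Ehom] .
lemma E_scale: "E m (sc c x) = sc c (E m x)" using module_hom.scale[OF Ehom] .
lemma E_zero[simp]: "E m 0 = 0" using module_hom.zero[OF Ehom] .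
lemma E_diff: "E m (x - y) = E m x - E m y" using module_hom.diff[OF Ehom] .
lemma E_sum: "E m (sum g S) = (\<Sum>a\<in>S. E m (g a))" using module_hom.sum[OF Ehom] .
lemma D_add: "D m (x + y) = D m x + D m y" using module_hom.add[OF Dhom] .
lemma D_scale: "D m (sc c x) = sc c (D m x)" using module_hom.scale[OF Dhom] .
lemma D_zero[simp]: "D m 0 = 0" using module_hom.zero[OF Dhom] .
lemma D_diff: "D m (x - y) = D m x - D m y" using module_hom.diff[OF Dhom] .
lemma D_sum: "D m (sum g S) = (\<Sum>a\<in>S. D m (g a))" using module_hom.sum[OF Dhom] .

lemma E_inv[simp]: "E (- m) (E m x) = x" by (simp add: Eadd E0)
lemma E_inv'[simp]: "E m (E (- m) x) = x" by (simp add: Eadd E0)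

definition Wt :: "complex \<Rightarrow> 'v set" where "Wt l = {u. D 0 u = sc l u}"

lemma Wt_subspace: "subspace (Wt l)"
  unfolding subspace_def Wt_def by (auto simp: D_add D_scale scale_right_distrib scale_left_commute)

lemma E_Wt: "u \<in> Wt l \<Longrightarrow> E m u \<in> Wt (l + of_int m)"
  using compat[of 0 m u] by (simp add: Wt_def E_scale scale_left_distrib add.commute)

lemma D_Wt: "u \<in> Wt l \<Longrightarrow> D s u \<in> Wt (l + of_int s)"
proof -
  assume u: "u \<in> Wt l"
  have "D 0 (D s u) - D s (D 0 u) = sc (of_int s) (D s u)" using Dbr[of 0 s u] by simp
  then have "D 0 (D s u) = sc (of_int s) (D s u) + D s (sc l u)" using u by (simp add: Wt_def algebra_simps)
  then show ?thesis by (simp add: Wt_def D_scale scale_left_distrib add.commute)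
qed

lemma wt_indep:
  assumes "finite S" "\<And>\<mu>. \<mu> \<in> S \<Longrightarrow> x \<mu> \<in> Wt \<mu>" "(\<Sum>\<mu>\<in>S. x \<mu>) = 0" "\<mu> \<in> S"
  shows "x \<mu> = 0"
  using assms
proof (induction S arbitrary: x \<mu> rule: finite_induct)
  case empty
  then show ?case by simp
next
  case (insert a S)
  define x' where "x' \<mu> = sc (\<mu> - a) (x \<mu>)" for \<mu>
  have x'W: "x' \<mu> \<in> Wt \<mu>" if "\<mu> \<in> S" for \<mu>
    using insert.prems(1) that subspace_scale[OF Wt_subspace] by (auto simp: x'_def)
  have "D 0 (\<Sum>\<mu>\<in>insert a S. x \<mu>) - sc a (\<Sum>\<mu>\<in>insert a S. x \<mu>) = 0"
    using insert.prems(2) by simp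
  moreover have "D 0 (\<Sum>\<mu>\<in>insert a S. x \<mu>) - sc a (\<Sum>\<mu>\<in>insert a S. x \<mu>) = (\<Sum>\<mu>\<in>insert a S. x' \<mu>)"
    using insert.prems(1)
    by (simp add: D_sum scale_sum_right x'_def scale_left_diff_distrib sum_subtractf Wt_def)
  ultimately have "(\<Sum>\<mu>\<in>S. x' \<mu>) = 0" using insert.hyps by (simp add: x'_def)
  then have x'0: "x' \<mu> = 0" if "\<mu> \<in> S" for \<mu>
    using insert.IH[of x' \<mu>] x'W that by blast
  have xS: "x \<mu> = 0" if "\<mu> \<in> S" for \<mu>
    using x'0[OF that] insert.hyps that by (auto simp: x'_def)
  then have "x a = 0" using insert.prems(2) insert.hyps by simp
  then show ?case using insert.prems(3) xS by auto
qed

lemma wt_component: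
  assumes fI: "finite I" and y: "\<And>i. i \<in> I \<Longrightarrow> y i \<in> Wt (wt i)"
    and u: "u \<in> Wt \<mu>" and sum: "u = (\<Sum>i\<in>I. y i)"
  shows "u = (\<Sum>i\<in>{i\<in>I. wt i = \<mu>}. y i)"
proof -
  define Y where "Y \<nu> = (\<Sum>i\<in>{i\<in>I. wt i = \<nu>}. y i)" for \<nu>
  have YW: "Y \<nu> \<in> Wt \<nu>" for \<nu>
    unfolding Y_def by (rule subspace_sum[OF Wt_subspace]) (use y in auto)
  have su: "(\<Sum>i\<in>I. y i) = (\<Sum>\<nu>\<in>wt ` I. Y \<nu>)"
    unfolding Y_def by (rule sum.image_gen[OF fI])
  define S where "S = insert \<mu> (wt ` I)"
  have fS: "finite S" using fI by (simp add: S_def)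
  have sY: "(\<Sum>\<nu>\<in>S. Y \<nu>) = (\<Sum>\<nu>\<in>wt ` I. Y \<nu>)"
  proof (cases "\<mu> \<in> wt ` I")
    case True then show ?thesis by (simp add: S_def insert_absorb)
  next
    case False
    then have "Y \<mu> = 0" by (auto simp: Y_def intro!: sum.neutral)
    then show ?thesis using False fI by (simp add: S_def)
  qed
  define x where "x \<nu> = Y \<nu> - (if \<nu> = \<mu> then u else 0)" for \<nu>
  have xW: "x \<nu> \<in> Wt \<nu>" for \<nu>
    using YW[of \<nu>] u subspace_diff[OF Wt_subspace] subspace_0[OF Wt_subspace] by (auto simp: x_def)
  have "(\<Sum>\<nu>\<in>S. x \<nu>) = (\<Sum>\<nu>\<in>S. Y \<nu>) - (\<Sum>\<nu>\<in>S. if \<nu> = \<mu> then u else 0)"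
    by (simp add: x_def sum_subtractf)
  also have "\<dots> = 0" using fS sY su sum by (simp add: S_def)
  finally have "x \<mu> = 0" using wt_indep[OF fS, of x \<mu>] xW by (simp add: S_def)
  then show ?thesis by (simp add: x_def Y_def)
qed

lemma decomp: "\<exists>S x. finite S \<and> (\<forall>\<mu>\<in>S. x \<mu> \<in> Wt \<mu>) \<and> w = (\<Sum>\<mu>\<in>S. x \<mu>)"
proof -
  obtain t r where t: "finite t" "t \<subseteq> {v. \<exists>a. D 0 v = sc a v}" "w = (\<Sum>a\<in>t. sc (r a) a)"
    using diag[of w] unfolding span_explicit by blast
  define ev where "ev a = (SOME l. D 0 a = sc l a)" for a
  have evW: "a \<in> Wt (ev a)" if "a \<in> t" for a
    using t(2) that someI_ex[of "\<lambda>l. D 0 a = sc l a"] by (auto simp: Wt_def ev_def)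
  define x where "x \<mu> = (\<Sum>a\<in>{a\<in>t. ev a = \<mu>}. sc (r a) a)" for \<mu>
  have "\<forall>\<mu>\<in>ev ` t. x \<mu> \<in> Wt \<mu>"
    unfolding x_def
    by (auto intro!: subspace_sum[OF Wt_subspace] subspace_scale[OF Wt_subspace]) (metis evW)
  moreover have "w = (\<Sum>\<mu>\<in>ev ` t. x \<mu>)"
    unfolding x_def t(3) by (rule sum.image_gen[OF t(1)])
  ultimately show ?thesis using t(1) by blast
qed


definition Sx :: "nat \<Rightarrow> complex set" where
  "Sx i = (SOME S. \<exists>x. finite S \<and> (\<forall>\<mu>\<in>S. x \<mu> \<in> Wt \<mu>) \<and> v0 i = (\<Sum>\<mu>\<in>S. x \<mu>))"

definition X :: "nat \<Rightarrow> complex \<Rightarrow> 'v" where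
  "X i = (SOME x. finite (Sx i) \<and> (\<forall>\<mu>\<in>Sx i. x \<mu> \<in> Wt \<mu>) \<and> v0 i = (\<Sum>\<mu>\<in>Sx i. x \<mu>))"

lemma SX: "finite (Sx i) \<and> (\<forall>\<mu>\<in>Sx i. X i \<mu> \<in> Wt \<mu>) \<and> v0 i = (\<Sum>\<mu>\<in>Sx i. X i \<mu>)"
proof -
  have "\<exists>x. finite (Sx i) \<and> (\<forall>\<mu>\<in>Sx i. x \<mu> \<in> Wt \<mu>) \<and> v0 i = (\<Sum>\<mu>\<in>Sx i. x \<mu>)"
    unfolding Sx_def by (rule someI_ex) (use decomp in blast)
  then show ?thesis unfolding X_def by (rule someI_ex)
qed

definition Gam :: "complex set" where "Gam = (\<Union>i<k0. Sx i)"

lemma finite_Gam: "finite Gam" using SX by (simp add: Gam_def)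

definition G :: "complex \<Rightarrow> 'v set" where
  "G \<mu> = (\<lambda>(i, \<gamma>). E \<lfloor>Re (\<mu> - \<gamma>)\<rfloor> (X i \<gamma>)) ` {(i, \<gamma>). i < k0 \<and> \<gamma> \<in> Sx i \<and> \<mu> - \<gamma> \<in> \<int>}"

lemma finite_G: "finite (G \<mu>)"
proof -
  have "{(i, \<gamma>). i < k0 \<and> \<gamma> \<in> Sx i \<and> \<mu> - \<gamma> \<in> \<int>} \<subseteq> {..<k0} \<times> Gam"
    by (auto simp: Gam_def)
  then show ?thesis unfolding G_def using finite_Gam by (meson finite_SigmaI finite_imageI finite_lessThan finite_subset)
qed

lemma wt_span:
  assumes u: "u \<in> Wt \<mu>"
  shows "u \<in> span (G \<mu>)" "u \<noteq> 0 \<Longrightarrow> \<exists>\<gamma>\<in>Gam. \<mu> - \<gamma> \<in> \<int>"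
proof -
  obtain c S where S: "finite S" "u = (\<Sum>i<k0. \<Sum>m\<in>S. sc (c i m) (E m (v0 i)))"
    using free unfolding F_basis_def by blast
  define I where "I = Sigma {..<k0} (\<lambda>i. S \<times> Sx i)"
  have fI: "finite I" using S(1) SX by (auto simp: I_def)
  define y where "y = (\<lambda>(i, m, \<gamma>). sc (c i m) (E m (X i \<gamma>)))"
  define wt where "wt = (\<lambda>(i::nat, m::int, \<gamma>::complex). \<gamma> + of_int m)"
  have yW: "y t \<in> Wt (wt t)" if "t \<in> I" for t
    using that SX by (auto simp: I_def y_def wt_def intro!: subspace_scale[OF Wt_subspace] E_Wt)
  have "u = (\<Sum>i<k0. \<Sum>m\<in>S. \<Sum>\<gamma>\<in>Sx i. y (i, m, \<gamma>))"
    unfolding S(2) y_def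
    by (intro sum.cong refl) (subst (1) conjunct2[OF conjunct2[OF SX]], simp add: E_sum scale_sum_right)
  also have "\<dots> = (\<Sum>i<k0. \<Sum>(m,\<gamma>)\<in>S \<times> Sx i. y (i, m, \<gamma>))"
    by (intro sum.cong refl) (simp add: sum.cartesian_product)
  also have "\<dots> = (\<Sum>t\<in>I. y t)"
    unfolding I_def using S(1) SX by (subst sum.Sigma) (auto simp: split_def)
  finally have usum: "u = (\<Sum>t\<in>I. y t)" .
  have ucomp: "u = (\<Sum>t\<in>{t\<in>I. wt t = \<mu>}. y t)"
    by (rule wt_component[OF fI yW u usum])
  have inG: "y t \<in> span (G \<mu>)" if tin: "t \<in> {t\<in>I. wt t = \<mu>}" for t
  proof -
    obtain i m \<gamma> where t: "t = (i, m, \<gamma>)" "i < k0" "\<gamma> \<in> Sx i" "\<gamma> + of_int m = \<mu>"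
      using tin by (cases t) (auto simp: I_def wt_def)
    have eq: "\<mu> - \<gamma> = of_int m" using t(4) by auto
    have "Re (\<mu> - \<gamma>) = Re (of_int m)" using eq by simp
    then have "Re \<mu> - Re \<gamma> = of_int m" by simp
    then have fl: "\<lfloor>Re \<mu> - Re \<gamma>\<rfloor> = m" by simp
    have "E m (X i \<gamma>) \<in> G \<mu>"
      unfolding G_def using t(2,3) eq fl by (auto intro!: image_eqI[of _ _ "(i, \<gamma>)"])
    then show ?thesis using t(1) by (simp add: y_def span_scale span_base)
  qed
  show "u \<in> span (G \<mu>)" by (subst ucomp) (auto intro!: span_sum inG)
  show "\<exists>\<gamma>\<in>Gam. \<mu> - \<gamma> \<in> \<int>" if "u \<noteq> 0"
  proof -
    have "{t\<in>I. wt t = \<mu>} \<noteq> {}" using ucomp that by (metis sum.empty)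
    then obtain i m \<gamma> where t: "i < k0" "\<gamma> \<in> Sx i" "\<gamma> + of_int m = \<mu>"
      by (auto simp: I_def wt_def)
    then have "\<mu> - \<gamma> = of_int m" by auto
    then have "\<mu> - \<gamma> \<in> \<int>" by simp
    moreover have "\<gamma> \<in> Gam" using t unfolding Gam_def by auto
    ultimately show ?thesis by blast
  qed
qed


definition rep :: "complex \<Rightarrow> complex" where "rep \<gamma> = (SOME \<gamma>'. \<gamma>' \<in> Gam \<and> \<gamma> - \<gamma>' \<in> \<int>)"
definition Lam0 :: "complex set" where "Lam0 = rep ` Gam"

lemma rep_in: "\<gamma> \<in> Gam \<Longrightarrow> rep \<gamma> \<in> Gam \<and> \<gamma> - rep \<gamma> \<in> \<int>"
  unfolding rep_def by (rule someI[of _ \<gamma>]) simp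

lemma rep_cong:
  assumes "\<gamma>1 - \<gamma>2 \<in> \<int>" shows "rep \<gamma>1 = rep \<gamma>2"
proof -
  have "(\<lambda>\<gamma>'. \<gamma>' \<in> Gam \<and> \<gamma>1 - \<gamma>' \<in> \<int>) = (\<lambda>\<gamma>'. \<gamma>' \<in> Gam \<and> \<gamma>2 - \<gamma>' \<in> \<int>)"
  proof (intro ext iffI conjI)
    fix \<gamma>' assume a: "\<gamma>' \<in> Gam \<and> \<gamma>1 - \<gamma>' \<in> \<int>"
    then show "\<gamma>' \<in> Gam" by simp
    have "\<gamma>2 - \<gamma>' = (\<gamma>1 - \<gamma>') - (\<gamma>1 - \<gamma>2)" by simp
    then show "\<gamma>2 - \<gamma>' \<in> \<int>" using a assms by (metis Ints_diff)
  next
    fix \<gamma>' assume a: "\<gamma>' \<in> Gam \<and> \<gamma>2 - \<gamma>' \<in> \<int>"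
    then show "\<gamma>' \<in> Gam" by simp
    have "\<gamma>1 - \<gamma>' = (\<gamma>2 - \<gamma>') + (\<gamma>1 - \<gamma>2)" by simp
    then show "\<gamma>1 - \<gamma>' \<in> \<int>" using a assms by (metis Ints_add)
  qed
  then show ?thesis unfolding rep_def by simp
qed

lemma Lam0_sep:
  assumes "l1 \<in> Lam0" "l2 \<in> Lam0" "l1 - l2 \<in> \<int>" shows "l1 = l2"
proof -
  obtain g1 g2 where g: "g1 \<in> Gam" "g2 \<in> Gam" "l1 = rep g1" "l2 = rep g2"
    using assms(1,2) by (auto simp: Lam0_def)
  have "g1 - g2 = (g1 - l1) + (l1 - l2) - (g2 - l2)" by simp
  then have "g1 - g2 \<in> \<int>" using rep_in[OF g(1)] rep_in[OF g(2)] assms(3) g(3,4)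
    by (metis Ints_add Ints_diff)
  then show ?thesis using rep_cong g(3,4) by simp
qed

lemma covers:
  assumes "u \<in> Wt \<mu>" "u \<noteq> 0" shows "\<exists>l\<in>Lam0. \<mu> - l \<in> \<int>"
proof -
  obtain \<gamma> where g: "\<gamma> \<in> Gam" "\<mu> - \<gamma> \<in> \<int>" using wt_span(2)[OF assms] by blast
  have "\<mu> - rep \<gamma> = (\<mu> - \<gamma>) + (\<gamma> - rep \<gamma>)" by simp
  then have "\<mu> - rep \<gamma> \<in> \<int>" using g rep_in[OF g(1)] by (metis Ints_add)
  then show ?thesis using g(1) by (auto simp: Lam0_def)
qed

definition Bf :: "complex \<Rightarrow> 'v set" where
  "Bf l = (SOME B. B \<subseteq> Wt l \<and> independent B \<and> Wt l \<subseteq> span B)"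

lemma Bf: "Bf l \<subseteq> Wt l \<and> independent (Bf l) \<and> Wt l \<subseteq> span (Bf l) \<and> finite (Bf l)"
proof -
  have b: "Bf l \<subseteq> Wt l \<and> independent (Bf l) \<and> Wt l \<subseteq> span (Bf l)"
    unfolding Bf_def by (rule someI_ex) (meson maximal_independent_subset)
  have "Bf l \<subseteq> span (G l)" using b wt_span(1) by blast
  then have "finite (Bf l)" using independent_span_bound[OF finite_G] b by blast
  then show ?thesis using b by blast
qed

definition BB :: "'v set" where "BB = (\<Union>l\<in>Lam0. Bf l)"

lemma finite_Lam0: "finite Lam0" by (simp add: Lam0_def finite_Gam)
lemma finite_BB: "finite BB" using Bf finite_Lam0 by (simp add: BB_def)

definition K :: nat where "K = card BB"
definition vv :: "nat \<Rightarrow> 'v" where "vv = (SOME h. bij_betw h {0..<K} BB)"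

lemma vv_bij: "bij_betw vv {..<K} BB"
proof -
  have "\<exists>h. bij_betw h {0..<K} BB" using ex_bij_betw_nat_finite[OF finite_BB] by (simp add: K_def)
  then have "bij_betw vv {0..<K} BB"
    unfolding vv_def by (rule someI_ex)
  then show ?thesis by (simp add: atLeast0LessThan)
qed

definition lam :: "nat \<Rightarrow> complex" where "lam r = (SOME l. l \<in> Lam0 \<and> vv r \<in> Bf l)"

lemma lam: "r < K \<Longrightarrow> lam r \<in> Lam0 \<and> vv r \<in> Bf (lam r)"
proof -
  assume "r < K"
  then have "vv r \<in> BB" using vv_bij by (auto simp: bij_betw_def)
  then have "\<exists>l. l \<in> Lam0 \<and> vv r \<in> Bf l" by (auto simp: BB_def)
  then show ?thesis unfolding lam_def by (rule someI_ex)
qed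

lemma vv_W: "r < K \<Longrightarrow> vv r \<in> Wt (lam r)"
proof -
  assume "r < K"
  then have "vv r \<in> Bf (lam r)" using lam by blast
  then show ?thesis using Bf[of "lam r"] by blast
qed

lemma vv_nz: "r < K \<Longrightarrow> vv r \<noteq> 0"
proof
  assume "r < K" "vv r = 0"
  then have "0 \<in> Bf (lam r)" using lam by metis
  then have "dependent (Bf (lam r))" by (rule dependent_zero)
  then show False using Bf[of "lam r"] by blast
qed

lemma Bf_lam:
  assumes "r < K" "vv r \<in> Bf l" shows "l = lam r"
proof -
  have "D 0 (vv r) = sc l (vv r)" using assms(2) Bf by (auto simp: Wt_def)
  moreover have "D 0 (vv r) = sc (lam r) (vv r)" using vv_W[OF assms(1)] by (auto simp: Wt_def)
  ultimately show ?thesis using vv_nz[OF assms(1)] by simp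
qed

lemma Bf_sub: "l \<in> Lam0 \<Longrightarrow> Bf l = vv ` {r. r < K \<and> lam r = l}"
proof
  assume l: "l \<in> Lam0"
  show "Bf l \<subseteq> vv ` {r. r < K \<and> lam r = l}"
  proof
    fix b assume b: "b \<in> Bf l"
    then have "b \<in> BB" using l by (auto simp: BB_def)
    then obtain r where r: "r < K" "b = vv r" using vv_bij by (auto simp: bij_betw_def)
    then have "lam r = l" using Bf_lam b by auto
    then show "b \<in> vv ` {r. r < K \<and> lam r = l}" using r by auto
  qed
  show "vv ` {r. r < K \<and> lam r = l} \<subseteq> Bf l" using lam by auto
qed


lemma vv_inj: "inj_on vv {..<K}" using vv_bij by (simp add: bij_betw_def)

lemma indep_part:
  assumes S: "finite S" and z: "(\<Sum>r<K. \<Sum>m\<in>S. sc (c r m) (E m (vv r))) = 0"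
    and r0: "r0 < K" and m0: "m0 \<in> S"
  shows "c r0 m0 = 0"
proof -
  define I where "I = {..<K} \<times> S"
  have fI: "finite I" using S by (simp add: I_def)
  define y where "y = (\<lambda>(r, m). sc (c r m) (E m (vv r)))"
  define wt where "wt = (\<lambda>(r, m::int). lam r + of_int m)"
  have yW: "y t \<in> Wt (wt t)" if "t \<in> I" for t
    using that by (auto simp: I_def y_def wt_def intro!: subspace_scale[OF Wt_subspace] E_Wt vv_W)
  define \<mu> where "\<mu> = lam r0 + of_int m0"
  have "0 = (\<Sum>t\<in>I. y t)" using z S by (simp add: I_def y_def sum.cartesian_product)
  then have "0 = (\<Sum>t\<in>{t\<in>I. wt t = \<mu>}. y t)"
    by (intro wt_component[OF fI yW]) (auto intro: subspace_0[OF Wt_subspace])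
  define R0 where "R0 = {r. r < K \<and> lam r = lam r0}"
  have fR0: "finite R0" by (simp add: R0_def)
  have "{t\<in>I. wt t = \<mu>} = (\<lambda>r. (r, m0)) ` R0"
  proof (intro equalityI subsetI)
    fix t assume "t \<in> {t\<in>I. wt t = \<mu>}"
    then obtain r m where t: "t = (r, m)" "r < K" "m \<in> S" "lam r + of_int m = lam r0 + of_int m0"
      by (cases t) (auto simp: I_def wt_def \<mu>_def)
    then have "lam r - lam r0 = of_int (m0 - m)" by (simp add: algebra_simps)
    then have "lam r - lam r0 \<in> \<int>" by simp
    then have "lam r = lam r0" using Lam0_sep lam t(2) r0 by blast
    then have "m = m0" using t(4) by simp
    then show "t \<in> (\<lambda>r. (r, m0)) ` R0" using t \<open>lam r = lam r0\<close> by (auto simp: R0_def)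
  next
    fix t assume "t \<in> (\<lambda>r. (r, m0)) ` R0"
    then show "t \<in> {t\<in>I. wt t = \<mu>}" using m0 by (auto simp: R0_def I_def wt_def \<mu>_def)
  qed
  then have "0 = (\<Sum>r\<in>R0. sc (c r m0) (E m0 (vv r)))"
    using \<open>0 = (\<Sum>t\<in>{t\<in>I. wt t = \<mu>}. y t)\<close> by (simp add: sum.reindex inj_on_def y_def)
  then have "E m0 (\<Sum>r\<in>R0. sc (c r m0) (vv r)) = 0" by (simp add: E_sum E_scale)
  then have "E (- m0) (E m0 (\<Sum>r\<in>R0. sc (c r m0) (vv r))) = 0" by simp
  then have s0: "(\<Sum>r\<in>R0. sc (c r m0) (vv r)) = 0" by simp
  have injR: "inj_on vv R0" using vv_inj by (rule inj_on_subset) (auto simp: R0_def)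
  define u where "u b = c (the_inv_into R0 vv b) m0" for b
  have "(\<Sum>b\<in>vv ` R0. sc (u b) b) = (\<Sum>r\<in>R0. sc (u (vv r)) (vv r))"
    by (rule sum.reindex[OF injR, unfolded comp_def])
  also have "\<dots> = (\<Sum>r\<in>R0. sc (c r m0) (vv r))"
    by (intro sum.cong refl) (simp add: u_def the_inv_into_f_f[OF injR])
  finally have s1: "(\<Sum>b\<in>vv ` R0. sc (u b) b) = 0" using s0 by simp
  have sub: "vv ` R0 \<subseteq> Bf (lam r0)" using Bf_sub[of "lam r0"] lam[OF r0] by (auto simp: R0_def)
  have "r0 \<in> R0" using r0 by (simp add: R0_def)
  then have "u (vv r0) = 0"
    using independentD[OF conjunct1[OF conjunct2[OF Bf]] finite_imageI[OF fR0] sub s1] by blast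
  then show ?thesis by (simp add: u_def the_inv_into_f_f[OF injR \<open>r0 \<in> R0\<close>])
qed


definition Spn :: "'v set" where
  "Spn = {x. \<exists>c S. finite S \<and> x = (\<Sum>r<K. \<Sum>m\<in>S. sc (c r m) (E m (vv r)))}"

lemma sum_ext_zero:
  assumes "finite S" "S1 \<subseteq> S"
  shows "(\<Sum>m\<in>S. sc (if m \<in> S1 then a m else 0) (F m)) = (\<Sum>m\<in>S1. sc (a m) (F m))"
proof -
  have "(\<Sum>m\<in>S. sc (if m \<in> S1 then a m else 0) (F m)) = (\<Sum>m\<in>S. if m \<in> S1 then sc (a m) (F m) else 0)"
    by (intro sum.cong) auto
  also have "\<dots> = (\<Sum>m\<in>S \<inter> S1. sc (a m) (F m))" by (rule sum.inter_restrict[OF assms(1), symmetric])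
  also have "S \<inter> S1 = S1" using assms(2) by blast
  finally show ?thesis .
qed

lemma Spn_subspace: "subspace Spn"
  unfolding subspace_def
proof (intro conjI ballI allI)
  show "0 \<in> Spn" unfolding Spn_def by (intro CollectI exI[of _ "\<lambda>r m. 0"] exI[of _ "{}"]) simp
next
  fix x y assume xS: "x \<in> Spn" and yS: "y \<in> Spn"
  from xS obtain c1 S1 where x: "finite S1" "x = (\<Sum>r<K. \<Sum>m\<in>S1. sc (c1 r m) (E m (vv r)))"
    unfolding Spn_def by auto
  from yS obtain c2 S2 where y: "finite S2" "y = (\<Sum>r<K. \<Sum>m\<in>S2. sc (c2 r m) (E m (vv r)))"
    unfolding Spn_def by auto
  define c where "c r m = (if m \<in> S1 then c1 r m else 0) + (if m \<in> S2 then c2 r m else 0)" for r m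
  have fS: "finite (S1 \<union> S2)" using x y by simp
  have e: "(\<Sum>m\<in>S1 \<union> S2. sc (c r m) (E m (vv r)))
     = (\<Sum>m\<in>S1. sc (c1 r m) (E m (vv r))) + (\<Sum>m\<in>S2. sc (c2 r m) (E m (vv r)))" for r
  proof -
    have "(\<Sum>m\<in>S1 \<union> S2. sc (c r m) (E m (vv r)))
      = (\<Sum>m\<in>S1 \<union> S2. sc (if m \<in> S1 then c1 r m else 0) (E m (vv r)))
       + (\<Sum>m\<in>S1 \<union> S2. sc (if m \<in> S2 then c2 r m else 0) (E m (vv r)))"
      unfolding c_def scale_left_distrib sum.distrib ..
    also have "\<dots> = (\<Sum>m\<in>S1. sc (c1 r m) (E m (vv r))) + (\<Sum>m\<in>S2. sc (c2 r m) (E m (vv r)))"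
      using sum_ext_zero[OF fS, of S1 "\<lambda>m. c1 r m" "\<lambda>m. E m (vv r)"]
        sum_ext_zero[OF fS, of S2 "\<lambda>m. c2 r m" "\<lambda>m. E m (vv r)"] by simp
    finally show ?thesis .
  qed
  have "(\<Sum>r<K. \<Sum>m\<in>S1 \<union> S2. sc (c r m) (E m (vv r))) = x + y"
    unfolding x(2) y(2) e sum.distrib ..
  then show "x + y \<in> Spn" unfolding Spn_def using fS by (intro CollectI exI[of _ c] exI[of _ "S1 \<union> S2"]) simp
next
  fix a x assume "x \<in> Spn"
  then obtain c S where x: "finite S" "x = (\<Sum>r<K. \<Sum>m\<in>S. sc (c r m) (E m (vv r)))"
    unfolding Spn_def by auto
  have "sc a x = (\<Sum>r<K. \<Sum>m\<in>S. sc (a * c r m) (E m (vv r)))"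
    by (simp add: x(2) scale_sum_right)
  then show "sc a x \<in> Spn" unfolding Spn_def using x(1) by (intro CollectI exI[of _ "\<lambda>r m. a * c r m"] exI[of _ S]) simp
qed

lemma Spn_basic: "r < K \<Longrightarrow> E n (vv r) \<in> Spn"
proof -
  assume r: "r < K"
  have "(\<Sum>r'<K. \<Sum>m\<in>{n}. sc (if r' = r then 1 else 0) (E m (vv r'))) = (\<Sum>r'<K. if r' = r then E n (vv r') else 0)"
    by (intro sum.cong refl) simp
  also have "\<dots> = E n (vv r)" using r by simp
  finally show ?thesis unfolding Spn_def by (intro CollectI exI[of _ "\<lambda>r' m. if r' = r then 1 else 0"] exI[of _ "{n}"]) simp
qed

lemma Spn_Wt0: "l \<in> Lam0 \<Longrightarrow> u \<in> Wt l \<Longrightarrow> E n u \<in> Spn"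
proof -
  assume l: "l \<in> Lam0" and u: "u \<in> Wt l"
  then have "u \<in> span (Bf l)" using Bf by blast
  then show ?thesis
  proof (induction rule: span_induct_alt)
    case base then show ?case using subspace_0[OF Spn_subspace] by simp
  next
    case (step c x y)
    then obtain r where "r < K" "x = vv r" using Bf_sub[OF l] by auto
    then have "E n x \<in> Spn" using Spn_basic by simp
    then show ?case using step subspace_add[OF Spn_subspace] subspace_scale[OF Spn_subspace]
      by (simp add: E_add E_scale)
  qed
qed

lemma Spn_Wt: "u \<in> Wt \<mu> \<Longrightarrow> u \<in> Spn"
proof -
  assume u: "u \<in> Wt \<mu>"
  show ?thesis
  proof (cases "u = 0")
    case True then show ?thesis using subspace_0[OF Spn_subspace] by simp
  next
    case False
    then obtain l where l: "l \<in> Lam0" "\<mu> - l \<in> \<int>" using covers[OF u] by blast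
    then obtain n where n: "\<mu> - l = of_int n" by (auto elim: Ints_cases)
    have "E (- n) u \<in> Wt (\<mu> + of_int (- n))" by (rule E_Wt[OF u])
    moreover have "\<mu> + of_int (- n) = l"
    proof -
      have "l = \<mu> - (\<mu> - l)" by simp
      then show ?thesis using n by simp
    qed
    ultimately have "E (- n) u \<in> Wt l" by simp
    then have "E n (E (- n) u) \<in> Spn" by (rule Spn_Wt0[OF l(1)])
    then show ?thesis by simp
  qed
qed

lemma Fbasis_new: "F_basis sc E K vv"
  unfolding F_basis_def
proof (intro conjI allI impI ballI)
  fix x
  obtain S y where S: "finite S" "\<forall>\<mu>\<in>S. y \<mu> \<in> Wt \<mu>" "x = (\<Sum>\<mu>\<in>S. y \<mu>)" using decomp by blast
  have "x \<in> Spn" unfolding S(3) by (rule subspace_sum[OF Spn_subspace]) (use S(2) Spn_Wt in blast)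
  then show "\<exists>c S. finite S \<and> x = (\<Sum>r<K. \<Sum>m\<in>S. sc (c r m) (E m (vv r)))" by (simp add: Spn_def)
next
  fix c S r m assume a: "finite S" "(\<Sum>r<K. \<Sum>m\<in>S. sc (c r m) (E m (vv r))) = 0" "r < K" "m \<in> S"
  show "c r m = 0" by (rule indep_part[OF a])
qed


lemma coef_ex: "r < K \<Longrightarrow> \<exists>g. E (- s) (D s (vv r)) = (\<Sum>l<K. sc (g l) (vv l))"
proof -
  assume r: "r < K"
  have "E (- s) (D s (vv r)) \<in> Wt (lam r + of_int s + of_int (- s))"
    by (intro E_Wt D_Wt vv_W r)
  then have "E (- s) (D s (vv r)) \<in> Wt (lam r)" by simp
  then have "E (- s) (D s (vv r)) \<in> span (Bf (lam r))" using Bf by blast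
  also have "span (Bf (lam r)) \<subseteq> span (vv ` {..<K})"
    using Bf_sub[of "lam r"] lam[OF r] by (intro span_mono) auto
  also have "span (vv ` {..<K}) = range (\<lambda>u. \<Sum>v\<in>vv ` {..<K}. sc (u v) v)"
    by (rule span_finite) simp
  finally obtain u where u: "E (- s) (D s (vv r)) = (\<Sum>v\<in>vv ` {..<K}. sc (u v) v)" by blast
  also have "\<dots> = (\<Sum>l<K. sc (u (vv l)) (vv l))"
    by (rule sum.reindex[OF vv_inj, unfolded comp_def])
  finally show ?thesis by (rule exI[of _ "\<lambda>l. u (vv l)"])
qed

definition fc :: "nat \<Rightarrow> nat \<Rightarrow> int \<Rightarrow> complex" where
  "fc r l s = (if r < K \<and> l < K then (SOME g. E (- s) (D s (vv r)) = (\<Sum>l<K. sc (g l) (vv l))) l else 0)"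

lemma D_vv: "r < K \<Longrightarrow> D s (vv r) = (\<Sum>l<K. sc (fc r l s) (E s (vv l)))"
proof -
  assume r: "r < K"
  define g where "g = (SOME g. E (- s) (D s (vv r)) = (\<Sum>l<K. sc (g l) (vv l)))"
  have ex: "\<exists>g. E (- s) (D s (vv r)) = (\<Sum>l<K. sc (g l) (vv l))" by (rule coef_ex[OF r])
  have g: "E (- s) (D s (vv r)) = (\<Sum>l<K. sc (g l) (vv l))"
    unfolding g_def by (rule someI_ex[OF ex])
  have "D s (vv r) = E s (E (- s) (D s (vv r)))" by simp
  also have "\<dots> = (\<Sum>l<K. sc (g l) (E s (vv l)))" by (simp add: g E_sum E_scale)
  also have "\<dots> = (\<Sum>l<K. sc (fc r l s) (E s (vv l)))"
    by (intro sum.cong refl) (simp add: fc_def r g_def)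
  finally show ?thesis .
qed

lemma D_Evv: "r < K \<Longrightarrow> D s (E m (vv r)) = (\<Sum>l<K. sc ((if l = r then of_int m else 0) + fc r l s) (E (m + s) (vv l)))"
proof -
  assume r: "r < K"
  have "D s (E m (vv r)) = sc (of_int m) (E (m + s) (vv r)) + (\<Sum>l<K. sc (fc r l s) (E (m + s) (vv l)))"
    using compat[of s m "vv r"] by (simp add: D_vv[OF r] E_sum E_scale Eadd)
  also have "sc (of_int m) (E (m + s) (vv r)) = (\<Sum>l<K. sc (if l = r then of_int m else 0) (E (m + s) (vv l)))"
  proof -
    have "(\<Sum>l<K. sc (if l = r then of_int m else 0) (E (m + s) (vv l))) = (\<Sum>l<K. if l = r then sc (of_int m) (E (m + s) (vv l)) else 0)"
      by (intro sum.cong) auto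
    also have "\<dots> = sc (of_int m) (E (m + s) (vv r))" using r by simp
    finally show ?thesis by simp
  qed
  finally show ?thesis by (simp add: scale_left_distrib sum.distrib)
qed

lemma DD_vv:
  assumes r: "r < K"
  shows "D s (D m (vv r)) = (\<Sum>p<K. sc (\<Sum>l<K. fc r l m * ((if p = l then of_int m else 0) + fc l p s)) (E (m + s) (vv p)))"
proof -
  have "D s (D m (vv r)) = (\<Sum>l<K. sc (fc r l m) (D s (E m (vv l))))"
    by (simp add: D_vv[OF r] D_sum D_scale)
  also have "\<dots> = (\<Sum>l<K. \<Sum>p<K. sc (fc r l m * ((if p = l then of_int m else 0) + fc l p s)) (E (m + s) (vv p)))"
    by (intro sum.cong refl) (simp add: D_Evv scale_sum_right)
  also have "\<dots> = (\<Sum>p<K. \<Sum>l<K. sc (fc r l m * ((if p = l then of_int m else 0) + fc l p s)) (E (m + s) (vv p)))"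
    by (rule sum.swap)
  also have "\<dots> = (\<Sum>p<K. sc (\<Sum>l<K. fc r l m * ((if p = l then of_int m else 0) + fc l p s)) (E (m + s) (vv p)))"
    by (simp add: scale_sum_left)
  finally show ?thesis .
qed

lemma fc_out: "K \<le> r \<or> K \<le> p \<Longrightarrow> fc r p s = 0" by (auto simp: fc_def)

lemma mrel: "mmul K (\<lambda>r l. fc r l m) (\<lambda>r l. fc r l s) r p - mmul K (\<lambda>r l. fc r l s) (\<lambda>r l. fc r l m) r p
   = of_int (m - s) * fc r p (s + m) - of_int m * fc r p m + of_int s * fc r p s"
proof (cases "r < K \<and> p < K")
  case False
  then show ?thesis by (auto simp: mmul_def fc_out)
next
  case True
  then have r: "r < K" and p: "p < K" by auto
  define coef where "coef q = (\<Sum>l<K. fc r l m * ((if q = l then of_int m else 0) + fc l q s))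
     - (\<Sum>l<K. fc r l s * ((if q = l then of_int s else 0) + fc l q m)) - of_int (m - s) * fc r q (s + m)" for q
  have "D s (D m (vv r)) - D m (D s (vv r)) - sc (of_int (m - s)) (D (s + m) (vv r)) = 0"
    using Dbr[of s m "vv r"] by simp
  moreover have "D s (D m (vv r)) - D m (D s (vv r)) - sc (of_int (m - s)) (D (s + m) (vv r))
     = (\<Sum>q<K. \<Sum>m'\<in>{s + m}. sc (coef q) (E m' (vv q)))"
  proof -
    have e1: "D s (D m (vv r)) = (\<Sum>q<K. sc (\<Sum>l<K. fc r l m * ((if q = l then of_int m else 0) + fc l q s)) (E (s + m) (vv q)))"
      using DD_vv[OF r, of s m] by (simp add: add.commute)
    have e2: "D m (D s (vv r)) = (\<Sum>q<K. sc (\<Sum>l<K. fc r l s * ((if q = l then of_int s else 0) + fc l q m)) (E (s + m) (vv q)))"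
      using DD_vv[OF r, of m s] by simp
    have e3: "D (s + m) (vv r) = (\<Sum>q<K. sc (fc r q (s + m)) (E (s + m) (vv q)))"
      by (rule D_vv[OF r])
    show ?thesis unfolding e1 e2 e3
      by (simp add: coef_def scale_sum_right scale_left_diff_distrib sum_subtractf)
  qed
  ultimately have "coef p = 0"
    using indep_part[of "{s + m}" "\<lambda>q m'. coef q" p "s + m"] p by simp
  moreover have "(\<Sum>l<K. fc r l m * ((if p = l then of_int m else 0) + fc l p s))
      = of_int m * fc r p m + mmul K (\<lambda>r l. fc r l m) (\<lambda>r l. fc r l s) r p"
  proof -
    have "(\<Sum>l<K. fc r l m * ((if p = l then of_int m else 0) + fc l p s))
        = (\<Sum>l<K. (if p = l then fc r l m * of_int m else 0) + fc r l m * fc l p s)"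
      by (intro sum.cong refl) (simp add: distrib_left)
    also have "\<dots> = (\<Sum>l<K. if p = l then fc r l m * of_int m else 0) + (\<Sum>l<K. fc r l m * fc l p s)"
      by (simp only: sum.distrib)
    finally show ?thesis using p by (simp add: mmul_def mult.commute)
  qed
  moreover have "(\<Sum>l<K. fc r l s * ((if p = l then of_int s else 0) + fc l p m))
      = of_int s * fc r p s + mmul K (\<lambda>r l. fc r l s) (\<lambda>r l. fc r l m) r p"
  proof -
    have "(\<Sum>l<K. fc r l s * ((if p = l then of_int s else 0) + fc l p m))
        = (\<Sum>l<K. (if p = l then fc r l s * of_int s else 0) + fc r l s * fc l p m)"
      by (intro sum.cong refl) (simp add: distrib_left)
    also have "\<dots> = (\<Sum>l<K. if p = l then fc r l s * of_int s else 0) + (\<Sum>l<K. fc r l s * fc l p m)"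
      by (simp only: sum.distrib)
    finally show ?thesis using p by (simp add: mmul_def mult.commute)
  qed
  ultimately show ?thesis by (simp add: coef_def algebra_simps)
qed

lemma fc_poly: "\<exists>P. \<forall>s. fc r p s = poly P (of_int s)"
proof -
  interpret PR: polyrel K "\<lambda>t r l. fc r l t"
    by unfold_locales (auto simp: fc_out mrel)
  show ?thesis using PR.M_poly by blast
qed

end

lemma poly2_of:
  assumes g: "\<forall>s. g s = poly P (of_int s)"
  shows "poly2 (\<lambda>s m. (if b then of_int m else 0) + g s)"
proof -
  define N where "N = max (degree P) 1"
  define c where "c i j = (if j = 0 then coeff P i else 0) + (if i = 0 \<and> j = 1 \<and> b then 1 else 0)" for i j :: nat
  have "(if b then of_int m else 0) + g s = (\<Sum>i\<le>N. \<Sum>j\<le>N. c i j * of_int s ^ i * of_int m ^ j)" for s m :: int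
  proof -
    have A: "(\<Sum>j\<le>N. (if j = 0 then coeff P i else 0) * of_int s ^ i * of_int m ^ j) = coeff P i * of_int s ^ i" for i
    proof -
      have "(\<Sum>j\<le>N. (if j = 0 then coeff P i else 0) * of_int s ^ i * (of_int m :: complex) ^ j)
          = (\<Sum>j\<le>N. if j = 0 then coeff P i * of_int s ^ i else 0)"
        by (intro sum.cong refl) simp
      also have "\<dots> = coeff P i * of_int s ^ i" by simp
      finally show ?thesis .
    qed
    have B: "(\<Sum>j\<le>N. (if i = 0 \<and> j = 1 \<and> b then 1 else 0) * of_int s ^ i * of_int m ^ j)
        = (if i = 0 \<and> b then of_int m else (0::complex))" for i
    proof -
      have "(\<Sum>j\<le>N. (if i = 0 \<and> j = 1 \<and> b then 1 else 0) * of_int s ^ i * (of_int m :: complex) ^ j)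
          = (\<Sum>j\<le>N. if j = 1 then (if i = 0 \<and> b then of_int m else 0) else 0)"
        by (intro sum.cong refl) auto
      also have "\<dots> = (if i = 0 \<and> b then of_int m else 0)" using N_def by simp
      finally show ?thesis .
    qed
    have "(\<Sum>i\<le>N. \<Sum>j\<le>N. c i j * of_int s ^ i * of_int m ^ j)
        = (\<Sum>i\<le>N. coeff P i * of_int s ^ i) + (\<Sum>i\<le>N. if i = 0 \<and> b then of_int m else 0)"
      by (simp only: c_def distrib_right sum.distrib A B)
    also have "(\<Sum>i\<le>N. coeff P i * of_int s ^ i) = poly P (of_int s)"
    proof -
      have dN: "degree P \<le> N" by (simp add: N_def)
      show ?thesis unfolding poly_altdef
        by (rule sum.mono_neutral_right) (use dN in \<open>auto simp: coeff_eq_0\<close>)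
    qed
    also have "(\<Sum>i\<le>N. if i = 0 \<and> b then of_int m else 0) = (if b then of_int m else (0::complex))"
    proof -
      have "(\<Sum>i\<le>N. if i = 0 \<and> b then of_int m else 0) = (\<Sum>i\<le>N. if i = 0 then (if b then of_int m else 0) else (0::complex))"
        by (intro sum.cong refl) auto
      also have "\<dots> = (if b then of_int m else 0)" by simp
      finally show ?thesis .
    qed
    finally show ?thesis using g by simp
  qed
  then show ?thesis unfolding poly2_def by blast
qed

theorem theorem1:
  fixes sc :: "complex \<Rightarrow> 'v::ab_group_add \<Rightarrow> 'v"
    and E D :: "int \<Rightarrow> 'v \<Rightarrow> 'v"
  assumes "in_J1 sc E D"
  shows "polynomial_module sc E D"
proof -
  have vs: "vector_space sc" and Fm: "F_module sc E" and Wm: "W1_module sc D"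
    and dg: "d0_diagonalizable sc D" and fr: "free_finite_rank sc E" and cp: "compatible sc E D"
    using assms by (auto simp: in_J1_def)
  obtain k0 v0 where fb: "F_basis sc E k0 v0" using fr unfolding free_finite_rank_def by blast
  interpret J: J1 sc E D k0 v0
    using vs Fm Wm dg fb cp
    by (simp add: J1_def J1_axioms_def F_module_def W1_module_def d0_diagonalizable_def compatible_def)
  have polys: "poly2 (\<lambda>s m. (if l = r then of_int m else 0) + J.fc r l s)" for r l
  proof -
    obtain P where "\<forall>s. J.fc r l s = poly P (of_int s)" using J.fc_poly by blast
    then show ?thesis by (rule poly2_of)
  qed
  show ?thesis
    unfolding polynomial_module_def
    using J.Fbasis_new polys J.D_Evv
    by (intro exI[of _ J.K] exI[of _ J.vv] exI[of _ "\<lambda>r l s m. (if l = r then of_int m else 0) + J.fc r l s"]) auto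
qed


end
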